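(* Let $c$ be a primitive combinatorial closed curve. Then the sequence of double points of a double path of $c$ contains no double point more than once. In particular, a double path of $c$ has length strictly less than $|c|$.
   Context: A combinatorial closed curve $c$ of length $|c|$ on a combinatorial surface has vertices $c(i)$ and arcs $c[i,i+1]$, $i\in\mathbb{Z}/|c|\mathbb{Z}$. It is primitive if its free homotopy class is not a proper power of another class. A forward index path of length $\ell$ is $(i,i+1,\dots,i+\ell)$, with image path $(c[i,i+1],\dots,c[i+\ell-1,i+\ell])$. A double point of $c$ is a pair of indices $(i,j)$, $i\neq j$, with $c(i)=c(j)$, where $(i,j)$ and $(j,i)$ represent the same double point. A double path of $c$ of length $\ell$ is a pair of forward index paths $((i,\dots,i+\ell),(j,\dots,j+\ell))$ with $i\ne j$ and identical image paths; its sequence of double points is $(i+k,j+k)$, $k=0,\dots,\ell$. *)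

theory Defs
  imports Main
begin

text \<open>A combinatorial surface is given by a finite set D of darts (oriented arcs),
  a map tail giving the tail vertex of a dart, an involution rv reversing a dart
  (without fixed points), and a set F of faces, each given by its boundary closed walk;
  every dart occurs exactly once on the face boundaries.
  The head of a dart d is tail (rv d).
  A combinatorial closed curve c is a cyclic list of darts: c[k,k+1] = c ! (k mod |c|),
  c(k) = tail (c ! (k mod |c|)).\<close>

definition closed_walk :: "('d \<Rightarrow> 'v) \<Rightarrow> ('d \<Rightarrow> 'd) \<Rightarrow> 'd list \<Rightarrow> bool" where
  "closed_walk tail rv c \<longleftrightarrow>
     (\<forall>k < length c. tail (rv (c ! k)) = tail (c ! ((k + 1) mod length c)))"

definition comb_surface :: "'d set \<Rightarrow> ('d \<Rightarrow> 'v) \<Rightarrow> ('d \<Rightarrow> 'd) \<Rightarrow> 'd list set \<Rightarrow> bool" where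
  "comb_surface D tail rv F \<longleftrightarrow>
     finite D \<and>
     (\<forall>d\<in>D. rv d \<in> D \<and> rv d \<noteq> d \<and> rv (rv d) = d) \<and>
     (\<forall>f\<in>F. f \<noteq> [] \<and> set f \<subseteq> D \<and> closed_walk tail rv f) \<and>
     (\<forall>d\<in>D. card {(f, k). f \<in> F \<and> k < length f \<and> f ! k = d} = 1)"

text \<open>Elementary combinatorial homotopy moves on closed curves (free homotopy):
  cyclic rotation of the curve, removal of a spur, removal of a (rotated) face
  boundary or of its reversal.\<close>

inductive htp_step :: "'d set \<Rightarrow> ('d \<Rightarrow> 'd) \<Rightarrow> 'd list set \<Rightarrow> 'd list \<Rightarrow> 'd list \<Rightarrow> bool"
  for D rv F where
  rot: "htp_step D rv F (x # xs) (xs @ [x])"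
| spur: "e \<in> D \<Longrightarrow> htp_step D rv F (us @ [e, rv e] @ vs) (us @ vs)"
| face: "f \<in> F \<Longrightarrow> htp_step D rv F (us @ rotate r f @ vs) (us @ vs)"
| face_rev: "f \<in> F \<Longrightarrow> htp_step D rv F (us @ rotate r (map rv (rev f)) @ vs) (us @ vs)"

definition freely_homotopic ::
  "'d set \<Rightarrow> ('d \<Rightarrow> 'v) \<Rightarrow> ('d \<Rightarrow> 'd) \<Rightarrow> 'd list set \<Rightarrow> 'd list \<Rightarrow> 'd list \<Rightarrow> bool" where
  "freely_homotopic D tail rv F c c' \<longleftrightarrow>
     (\<lambda>x y. closed_walk tail rv x \<and> set x \<subseteq> D \<and> closed_walk tail rv y \<and> set y \<subseteq> D \<and>
            (htp_step D rv F x y \<or> htp_step D rv F y x))\<^sup>*\<^sup>* c c'"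

definition primitive ::
  "'d set \<Rightarrow> ('d \<Rightarrow> 'v) \<Rightarrow> ('d \<Rightarrow> 'd) \<Rightarrow> 'd list set \<Rightarrow> 'd list \<Rightarrow> bool" where
  "primitive D tail rv F c \<longleftrightarrow>
     \<not> (\<exists>a k. k \<ge> 2 \<and> closed_walk tail rv a \<and> set a \<subseteq> D \<and>
              freely_homotopic D tail rv F c (concat (replicate k a)))"

end

theory Submission imports Defs begin

lemma mod_shift: "(a::nat) mod n = b mod n \<Longrightarrow> (a + t) mod n = (b + t) mod n"
  by (metis mod_add_left_eq)

lemma mod_unshift:
  assumes "((a::nat) + t) mod n = (b + t) mod n" shows "a mod n = b mod n"
proof (cases "a \<le> b")
  case True
  have "n dvd (b+t) - (a+t)" using assms True mod_eq_dvd_iff_nat[of "a+t" "b+t" n] by simp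
  then have "n dvd b - a" by simp
  then show ?thesis using True mod_eq_dvd_iff_nat[of a b n] by simp
next
  case False
  have "n dvd (a+t) - (b+t)" using assms False mod_eq_dvd_iff_nat[of "b+t" "a+t" n] by simp
  then have "n dvd a - b" by simp
  then show ?thesis using False mod_eq_dvd_iff_nat[of b a n] by simp
qed

lemma list_power:
  assumes "g > 0" "length xs = m * g" "\<forall>k. k + g < length xs \<longrightarrow> xs!(k+g) = xs!k"
  shows "xs = concat (replicate m (take g xs))"
  using assms
proof (induction m arbitrary: xs)
  case 0 then show ?case by simp
next
  case (Suc m)
  let ?ys = "drop g xs"
  have len: "length ?ys = m * g" using Suc.prems by simp
  have per: "\<forall>k. k + g < length ?ys \<longrightarrow> ?ys!(k+g) = ?ys!k"
  proof (intro allI impI)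
    fix k assume k: "k + g < length ?ys"
    have "xs!(k+g+g) = xs!(k+g)" using Suc.prems(3) k by simp
    then show "?ys!(k+g) = ?ys!k" using k by (simp add: algebra_simps)
  qed
  have IH: "?ys = concat (replicate m (take g ?ys))" using Suc.IH[OF Suc.prems(1) len per] .
  show ?case
  proof (cases m)
    case 0 then show ?thesis using Suc.prems by simp
  next
    case (Suc m')
    have "take g ?ys = take g xs"
    proof (rule nth_equalityI)
      show "length (take g ?ys) = length (take g xs)" using Suc.prems len Suc by simp
      fix k assume "k < length (take g ?ys)"
      then have "k < g" "k + g < length xs" using len Suc Suc.prems by auto
      moreover have "xs!(k+g) = xs!k" using Suc.prems(3) \<open>k + g < length xs\<close> by blast
      ultimately show "take g ?ys ! k = take g xs ! k" by (simp add: add.commute)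
    qed
    then have "?ys = concat (replicate m (take g xs))" using IH by simp
    then have "xs = take g xs @ concat (replicate m (take g xs))"
      by (metis append_take_drop_id)
    then show ?thesis by simp
  qed
qed

lemma periodic_power:
  assumes n: "length c = n" "n > 0" and s: "s mod n \<noteq> 0"
    and P: "\<forall>x. c!((x+s) mod n) = c!(x mod n)"
  shows "\<exists>g m. g > 0 \<and> m \<ge> 2 \<and> n = m*g \<and> g < n \<and> (\<forall>x. c!((x+g) mod n) = c!(x mod n))"
proof -
  define s' where "s' = s mod n"
  have s'pos: "s' > 0" "s' < n" using s n unfolding s'_def by auto
  have P': "\<forall>x. c!((x+s') mod n) = c!(x mod n)" using P unfolding s'_def
    by (metis mod_add_right_eq)
  have iter: "c!((x+u*s') mod n) = c!(x mod n)" for u x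
  proof (induction u arbitrary: x)
    case 0 then show ?case by simp
  next
    case (Suc u)
    have "c!((x + Suc u * s') mod n) = c!(((x+s') + u*s') mod n)" by (simp add: algebra_simps)
    also have "\<dots> = c!((x+s') mod n)" using Suc.IH .
    also have "\<dots> = c!(x mod n)" using P' by simp
    finally show ?case .
  qed
  define g where "g = gcd s' n"
  obtain u y where uy: "s' * u = n * y + g" using bezout_nat[of s' n] s'pos unfolding g_def by auto
  have Pg: "\<forall>x. c!((x+g) mod n) = c!(x mod n)"
  proof
    fix x
    have "(x + u*s') mod n = (x + g + n*y) mod n" using uy by (simp add: algebra_simps)
    also have "\<dots> = (x+g) mod n" by simp
    finally show "c!((x+g) mod n) = c!(x mod n)" using iter[of x u] by simp
  qed
  have g0: "g > 0" using s'pos unfolding g_def by simp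
  have gle: "g \<le> s'" using s'pos unfolding g_def by (simp add: gcd_le1_nat)
  have gdvd: "g dvd n" unfolding g_def by simp
  then obtain m where m: "n = m * g" by (metis dvd_div_mult_self)
  have "m \<ge> 2"
  proof (rule ccontr)
    assume "\<not> m \<ge> 2"
    then have "m = 0 \<or> m = 1" by auto
    then show False using m n gle s'pos by auto
  qed
  then show ?thesis using g0 m Pg gle s'pos by (intro exI[of _ g] exI[of _ m]) auto
qed

lemma window:
  assumes "n > 0" "\<forall>t<n. c!((a+t+s) mod n) = c!((a+t) mod n)"
  shows "\<forall>x. c!((x+s) mod n) = c!(x mod n)"
proof
  fix x
  define t where "t = (x + n - a mod n) mod n"
  have t: "t < n" using assms unfolding t_def by simp
  have e: "(a + t) mod n = x mod n"
  proof -
    have "(a + t) mod n = (a + (x + n - a mod n)) mod n" by (simp add: t_def mod_add_right_eq)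
    also have "\<dots> = (a mod n + (x + n - a mod n)) mod n" by (simp add: mod_add_left_eq)
    also have "a mod n + (x + n - a mod n) = x + n" using mod_less_divisor[OF assms(1), of a] by linarith
    finally show ?thesis by simp
  qed
  have e2: "(a + t + s) mod n = (x + s) mod n" using mod_shift[OF e] .
  have "c!((a+t+s) mod n) = c!((a+t) mod n)" using assms(2) t by blast
  then show "c!((x+s) mod n) = c!(x mod n)" using e e2 by simp
qed


lemma not_periodic:
  assumes cw: "closed_walk tail rv c" and sD: "set c \<subseteq> D"
    and pr: "primitive D tail rv F c" and n: "length c = n" "n > 0"
    and s: "s mod n \<noteq> 0" and P: "\<forall>x. c!((x+s) mod n) = c!(x mod n)"
  shows False
proof -
  obtain g m where gm: "g > 0" "m \<ge> 2" "n = m*g" "g < n"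
    and Pg: "\<forall>x. c!((x+g) mod n) = c!(x mod n)"
    using periodic_power[OF n s P] by blast
  define a where "a = take g c"
  have per: "\<forall>k. k + g < length c \<longrightarrow> c!(k+g) = c!k"
  proof (intro allI impI)
    fix k assume k: "k + g < length c"
    then have "k < n" "k + g < n" using n by auto
    then show "c!(k+g) = c!k" using Pg[rule_format, of k] by simp
  qed
  have eq: "c = concat (replicate m a)" unfolding a_def
    using list_power[OF gm(1) _ per] n gm by simp
  have la: "length a = g" using gm n unfolding a_def by simp
  have cwa: "closed_walk tail rv a"
    unfolding closed_walk_def
  proof (intro allI impI)
    fix k assume k: "k < length a"
    then have kg: "k < g" using la by simp
    have "g \<le> m * g" using gm(2) by simp
    then have kn: "k < length c" using kg gm(3) n by linarith
    have ck: "tail (rv (c ! k)) = tail (c ! ((k + 1) mod n))"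
      using cw kn n unfolding closed_walk_def by auto
    show "tail (rv (a ! k)) = tail (a ! ((k + 1) mod length a))"
    proof (cases "k + 1 < g")
      case True
      then show ?thesis using ck kg gm la unfolding a_def by simp
    next
      case False
      then have "k + 1 = g" using kg by simp
      moreover have "c ! g = c ! 0" using Pg[rule_format, of 0] gm n by simp
      ultimately show ?thesis using ck kg gm la unfolding a_def by simp
    qed
  qed
  have sa: "set a \<subseteq> D" using sD unfolding a_def by (meson order_trans set_take_subset)
  have "freely_homotopic D tail rv F c (concat (replicate m a))"
    unfolding freely_homotopic_def using eq by simp
  then show False using pr cwa sa gm unfolding primitive_def by blast
qed

theorem lemma18:
  fixes D :: "'d set" and tail :: "'d \<Rightarrow> 'v" and rv :: "'d \<Rightarrow> 'd"
    and F :: "'d list set" and c :: "'d list" and i j l :: nat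
  assumes "comb_surface D tail rv F"
    and "closed_walk tail rv c" and "set c \<subseteq> D"
    and "primitive D tail rv F c"
    and "i < length c" and "j < length c" and "i \<noteq> j"
    and "\<forall>k < l. c ! ((i + k) mod length c) = c ! ((j + k) mod length c)"
  shows "(\<forall>k k'. k < k' \<and> k' \<le> l \<longrightarrow>
            {(i + k) mod length c, (j + k) mod length c}
              \<noteq> {(i + k') mod length c, (j + k') mod length c})
         \<and> l < length c"
proof -
  define n where "n = length c"
  have n0: "n > 0" using assms(5) unfolding n_def by auto
  have A: "\<forall>k k'. k < k' \<and> k' \<le> l \<longrightarrow>
            {(i + k) mod n, (j + k) mod n} \<noteq> {(i + k') mod n, (j + k') mod n}"
  proof (intro allI impI notI)
    fix k k' assume kk: "k < k' \<and> k' \<le> l"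
      and seq: "{(i + k) mod n, (j + k) mod n} = {(i + k') mod n, (j + k') mod n}"
    define d where "d = k' - k"
    have d0: "d > 0" and k'd: "k' = k + d" using kk unfolding d_def by auto
    have W: "c ! ((i + k + t) mod n) = c ! ((j + k + t) mod n)" if "t < d" for t
    proof -
      have "k + t < l" using that kk k'd by simp
      then show ?thesis using assms(8) unfolding n_def by (simp add: add.assoc)
    qed
    have ij: "i mod n \<noteq> j mod n" using assms(5-7) unfolding n_def by simp
    from seq have "((i + k) mod n = (i + k') mod n \<and> (j + k) mod n = (j + k') mod n)
        \<or> ((i + k) mod n = (j + k') mod n \<and> (j + k) mod n = (i + k') mod n)"
      by (auto simp: doubleton_eq_iff)
    then show False
    proof
      assume h: "(i + k) mod n = (i + k') mod n \<and> (j + k) mod n = (j + k') mod n"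
      have "(i + k + 0) mod n = (i + k + d) mod n" using h k'd by (simp add: add.assoc)
      then have "n dvd d" using mod_eq_dvd_iff_nat[of "i+k+0" "i+k+d" n] by simp
      then have dn: "n \<le> d" using d0 by (simp add: dvd_imp_le)
      define s where "s = j + n - i"
      have sn: "s mod n \<noteq> 0"
      proof
        assume "s mod n = 0"
        then have "(i + s) mod n = i mod n" by (metis add.right_neutral mod_add_right_eq)
        moreover have "i + s = j + n" unfolding s_def using assms(5) n_def by simp
        ultimately show False using ij by simp
      qed
      have "\<forall>t<n. c!((i + k + t + s) mod n) = c!((i + k + t) mod n)"
      proof (intro allI impI)
        fix t assume "t < n"
        then have "t < d" using dn by simp
        moreover have "i + k + t + s = (j + k + t) + n" unfolding s_def using assms(5) n_def by simp
        then have "(i + k + t + s) mod n = (j + k + t) mod n" by (simp only: mod_add_self2)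
        ultimately show "c!((i + k + t + s) mod n) = c!((i + k + t) mod n)" using W by metis
      qed
      then show False using not_periodic[OF assms(2,3,4) n_def[symmetric] n0 sn] window[OF n0] by blast
    next
      assume h: "(i + k) mod n = (j + k') mod n \<and> (j + k) mod n = (i + k') mod n"
      have e1: "(j + k + t) mod n = (i + k + t + d) mod n" for t
      proof -
        have "(j + k) mod n = (i + k + d) mod n" using h k'd by (simp add: add.assoc)
        from mod_shift[OF this, of t] show ?thesis by (simp add: algebra_simps)
      qed
      have e2: "(i + k + 2*d) mod n = (i + k) mod n"
      proof -
        have "(i + k + 2*d) mod n = ((j + k + d) mod n)"
        proof -
          have "i + k + 2*d = i + k + d + d" by simp
          then show ?thesis using e1[of d] by (simp only:)
        qed
        also have "\<dots> = (i + k) mod n" using mod_shift[of "j+k" n "i+k'" d] h k'd by (simp add: add.assoc)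
        finally show ?thesis .
      qed
      have e3: "(i + k + t + 2*d) mod n = (i + k + t) mod n" for t
        using mod_shift[OF e2, of t] by (simp add: algebra_simps)
      have sn: "d mod n \<noteq> 0"
      proof
        assume "d mod n = 0"
        then have "(i + k + 0 + d) mod n = (i + k + 0) mod n" by (metis add.right_neutral mod_add_right_eq)
        then have "(j + k) mod n = (i + k) mod n" using e1[of 0] by simp
        then have "j mod n = i mod n" using mod_unshift[of j k n i] by simp
        then show False using ij by simp
      qed
      have "2*d mod n = 0"
      proof -
        have "((i+k) + 2*d) mod n = ((i+k) + 0) mod n" using e2 by simp
        then show ?thesis using mod_unshift[of "2*d" "i+k" n 0] by (simp add: add.commute)
      qed
      then have "n dvd 2*d" by (simp add: mod_0_imp_dvd)
      then have dn: "n \<le> 2*d" using d0 by (simp add: dvd_imp_le)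
      have "\<forall>t<n. c!((i + k + t + d) mod n) = c!((i + k + t) mod n)"
      proof (intro allI impI)
        fix t assume "t < n"
        then have t2: "t < 2*d" using dn by simp
        show "c!((i + k + t + d) mod n) = c!((i + k + t) mod n)"
        proof (cases "t < d")
          case True
          then show ?thesis using W[OF True] e1[of t] by simp
        next
          case False
          define t' where "t' = t - d"
          have t': "t' < d" "t = t' + d" using False t2 unfolding t'_def by auto
          have "c!((i + k + t + d) mod n) = c!((i + k + t' + 2*d) mod n)"
          proof -
            have "i + k + t + d = i + k + t' + 2*d" using t' by simp
            then show ?thesis by (simp only:)
          qed
          also have "\<dots> = c!((i + k + t') mod n)" using e3 by simp
          also have "\<dots> = c!((j + k + t') mod n)" using W[OF t'(1)] .
          also have "\<dots> = c!((i + k + t) mod n)"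
          proof -
            have "i + k + t = i + k + t' + d" using t' by simp
            then show ?thesis using e1[of t'] by (simp only:)
          qed
          finally show ?thesis .
        qed
      qed
      then show False using not_periodic[OF assms(2,3,4) n_def[symmetric] n0 sn] window[OF n0] by blast
    qed
  qed
  moreover have "l < n"
  proof (rule ccontr)
    assume "\<not> l < n"
    then show False using A[rule_format, of 0 n] n0 by simp
  qed
  ultimately show ?thesis unfolding n_def by simp
qed

end
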